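(* Every triangle-free circle intersection graph has a proper vertex coloring with at most $6$ colors.
   Context: A graph $G$ is a circle intersection graph if its vertices can be put in one-to-one correspondence with closed disks (circles) of arbitrary positive radii in the plane so that two vertices are adjacent if and only if the corresponding disks intersect (tangent circles are considered to intersect). A graph is triangle-free if it has no subgraph isomorphic to $K_3$. *)

theory Defs
  imports "HOL-Analysis.Analysis"
begin

definition simple_graph :: "'a set \<Rightarrow> ('a \<Rightarrow> 'a \<Rightarrow> bool) \<Rightarrow> bool" where
  "simple_graph V E \<longleftrightarrow> finite V \<and>
     (\<forall>u v. E u v \<longrightarrow> u \<in> V \<and> v \<in> V) \<and>
     (\<forall>u v. E u v \<longrightarrow> E v u) \<and> (\<forall>v. \<not> E v v)"

definition circle_intersection_graph :: "'a set \<Rightarrow> ('a \<Rightarrow> 'a \<Rightarrow> bool) \<Rightarrow> bool" where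
  "circle_intersection_graph V E \<longleftrightarrow>
     (\<exists>(c :: 'a \<Rightarrow> real^2) (r :: 'a \<Rightarrow> real).
        (\<forall>v\<in>V. r v > 0) \<and>
        inj_on (\<lambda>v. cball (c v) (r v)) V \<and>
        (\<forall>u\<in>V. \<forall>v\<in>V. u \<noteq> v \<longrightarrow>
            (E u v \<longleftrightarrow> cball (c u) (r u) \<inter> cball (c v) (r v) \<noteq> {})))"

definition triangle_free :: "'a set \<Rightarrow> ('a \<Rightarrow> 'a \<Rightarrow> bool) \<Rightarrow> bool" where
  "triangle_free V E \<longleftrightarrow>
     \<not> (\<exists>u\<in>V. \<exists>v\<in>V. \<exists>w\<in>V. E u v \<and> E v w \<and> E u w)"

definition proper_colorable :: "'a set \<Rightarrow> ('a \<Rightarrow> 'a \<Rightarrow> bool) \<Rightarrow> nat \<Rightarrow> bool" where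
  "proper_colorable V E k \<longleftrightarrow>
     (\<exists>col :: 'a \<Rightarrow> nat. (\<forall>v\<in>V. col v < k) \<and>
        (\<forall>u\<in>V. \<forall>v\<in>V. E u v \<longrightarrow> col u \<noteq> col v))"

end

theory Submission
  imports Defs
begin

lemma cdist_sq:
  fixes z w :: complex
  shows "(cmod (z - w))^2 = (cmod z)^2 + (cmod w)^2 - 2 * cmod z * cmod w * cos (Arg2pi z - Arg2pi w)"
proof -
  have rz: "Re z = cmod z * cos (Arg2pi z)" and iz: "Im z = cmod z * sin (Arg2pi z)"
    using cos_Arg2pi sin_Arg2pi by metis+
  have rw: "Re w = cmod w * cos (Arg2pi w)" and iw: "Im w = cmod w * sin (Arg2pi w)"
    using cos_Arg2pi sin_Arg2pi by metis+
  have "(cmod (z - w))^2 = (Re z - Re w)^2 + (Im z - Im w)^2" by (simp add: cmod_power2)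
  also have "\<dots> = (cmod z)^2 * ((cos (Arg2pi z))^2 + (sin (Arg2pi z))^2)
     + (cmod w)^2 * ((cos (Arg2pi w))^2 + (sin (Arg2pi w))^2)
     - 2 * cmod z * cmod w * (cos (Arg2pi z) * cos (Arg2pi w) + sin (Arg2pi z) * sin (Arg2pi w))"
    unfolding rz iz rw iw power2_eq_square by (simp only: algebra_simps)
  finally show ?thesis by (simp add: cos_diff sin_cos_squared_add)
qed

lemma close_pair:
  fixes z w :: complex
  assumes "cmod z \<le> \<rho>" "cmod w \<le> \<rho>" "cos (Arg2pi z - Arg2pi w) \<ge> 1/2"
  shows "cmod (z - w) \<le> \<rho>"
proof -
  let ?a = "cmod z" and ?b = "cmod w"
  have "(cmod (z - w))^2 \<le> ?a^2 + ?b^2 - ?a * ?b"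
    using cdist_sq[of z w] assms(3) mult_left_mono[OF assms(3), of "2 * ?a * ?b"] by simp
  also have "\<dots> \<le> \<rho>^2"
  proof (cases "?a \<le> ?b")
    case True
    then have "?a^2 - ?a * ?b \<le> 0" by (simp add: power2_eq_square mult_left_mono)
    moreover have "?b^2 \<le> \<rho>^2" using assms(2) by (simp add: power_mono)
    ultimately show ?thesis by linarith
  next
    case False
    then have "?b^2 - ?a * ?b \<le> 0" by (simp add: power2_eq_square mult_right_mono)
    moreover have "?a^2 \<le> \<rho>^2" using assms(1) by (simp add: power_mono)
    ultimately show ?thesis by linarith
  qed
  finally show ?thesis using assms(1) by (meson norm_ge_zero order_trans power2_le_imp_le)
qed

lemma cos_ge_half:
  assumes "\<bar>x\<bar> \<le> pi/3 \<or> (5*pi/3 \<le> x \<and> x \<le> 2*pi) \<or> (5*pi/3 \<le> -x \<and> -x \<le> 2*pi)"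
  shows "cos x \<ge> 1/2"
proof -
  have m: "cos y \<ge> 1/2" if "0 \<le> y" "y \<le> pi/3" for y
    using cos_monotone_0_pi_le[of y "pi/3"] that cos_60 by simp
  show ?thesis using assms
  proof (elim disjE)
    assume "\<bar>x\<bar> \<le> pi/3" then show ?thesis using m[of "\<bar>x\<bar>"] by simp
  next
    assume h: "5*pi/3 \<le> x \<and> x \<le> 2*pi"
    then show ?thesis using m[of "2*pi - x"] by simp
  next
    assume h: "5*pi/3 \<le> -x \<and> -x \<le> 2*pi"
    then show ?thesis using m[of "2*pi + x"] cos_2pi_minus[of "-x"] by simp
  qed
qed

lemma five_points:
  fixes S :: "complex set"
  assumes fin: "finite S" and bnd: "\<forall>z\<in>S. cmod z \<le> \<rho>"
    and sep: "\<forall>z\<in>S. \<forall>w\<in>S. z \<noteq> w \<longrightarrow> cmod (z - w) > \<rho>"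
  shows "card S \<le> 5"
proof (rule ccontr)
  assume "\<not> card S \<le> 5"
  then have c6: "card S \<ge> 6" by simp
  then have "S \<noteq> {}" by auto
  have bad: False if "z \<in> S" "w \<in> S" "z \<noteq> w" "cos (Arg2pi z - Arg2pi w) \<ge> 1/2" for z w
    using close_pair[of z \<rho> w] that bnd sep by force
  define a where "a = Min (Arg2pi ` S)"
  obtain m where m: "m \<in> S" "Arg2pi m = a"
    using Min_in[of "Arg2pi ` S"] fin \<open>S \<noteq> {}\<close> unfolding a_def by (metis (no_types, lifting) empty_is_image finite_imageI imageE)
  have amin: "a \<le> Arg2pi z" if "z \<in> S" for z
    using Min_le[of "Arg2pi ` S"] fin that unfolding a_def by auto
  define T where "T = S - {m}"
  have finT: "finite T" using fin T_def by auto
  have cT: "card T \<ge> 5" using c6 m(1) fin unfolding T_def by (simp add: card_Diff_singleton)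
  have rng: "0 \<le> Arg2pi z - a \<and> Arg2pi z - a < 2*pi" if "z \<in> S" for z
    using amin[OF that] Arg2pi[of z] Arg2pi[of m] m(2) by linarith
  show False
  proof (cases "\<exists>z\<in>T. Arg2pi z - a \<le> pi/3 \<or> Arg2pi z - a \<ge> 5*pi/3")
    case True
    then obtain z where z: "z \<in> T" "Arg2pi z - a \<le> pi/3 \<or> Arg2pi z - a \<ge> 5*pi/3" by blast
    have "z \<in> S" "z \<noteq> m" using z(1) T_def by auto
    have "cos (Arg2pi z - Arg2pi m) \<ge> 1/2"
      apply (rule cos_ge_half) using z(2) rng[OF \<open>z \<in> S\<close>] m(2) by auto
    then show False using bad[OF \<open>z \<in> S\<close> m(1) \<open>z \<noteq> m\<close>] by simp
  next
    case False
    define g where "g z = \<lceil>(Arg2pi z - a) / (pi/3)\<rceil>" for z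
    have gr: "g z \<in> {2..5}" if "z \<in> T" for z
    proof -
      have "pi/3 < Arg2pi z - a" "Arg2pi z - a < 5*pi/3" using False that by auto
      then have "1 < (Arg2pi z - a) / (pi/3)" "(Arg2pi z - a) / (pi/3) < 5"
        by (simp_all add: field_simps)
      then show ?thesis unfolding g_def by (simp add: le_ceiling_iff ceiling_le_iff)
    qed
    have "\<not> inj_on g T"
    proof
      assume "inj_on g T"
      then have "card T \<le> card {2..5::int}" using gr by (intro card_inj_on_le) auto
      then show False using cT by simp
    qed
    then obtain z w where zw: "z \<in> T" "w \<in> T" "z \<noteq> w" "g z = g w"
      unfolding inj_on_def by blast
    let ?x = "(Arg2pi z - a) / (pi/3)" and ?y = "(Arg2pi w - a) / (pi/3)"
    have "\<bar>?x - ?y\<bar> < 1" using zw(4) unfolding g_def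
      using ceiling_correct[of ?x] ceiling_correct[of ?y] by linarith
    then have "\<bar>(Arg2pi z - a) - (Arg2pi w - a)\<bar> < pi/3"
      by (simp add: diff_divide_distrib[symmetric] field_simps abs_divide) (simp add: abs_if split: if_splits)
    then have "cos (Arg2pi z - Arg2pi w) \<ge> 1/2" by (intro cos_ge_half) simp
    then show False using bad[of z w] zw T_def by auto
  qed
qed

definition c2 :: "real^2 \<Rightarrow> complex" where "c2 x = Complex (x$1) (x$2)"

lemma c2_norm: "cmod (c2 x) = norm x"
  unfolding c2_def norm_vec_def L2_set_def cmod_def by (simp add: sum_2)

lemma c2_diff: "c2 x - c2 y = c2 (x - y)"
  unfolding c2_def by (simp add: complex_eq_iff)

lemma cball_meet:
  fixes a b :: "'b::real_normed_vector"
  assumes "ra > 0" "rb > 0" "dist a b \<le> ra + rb"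
  shows "cball a ra \<inter> cball b rb \<noteq> {}"
proof -
  define t where "t = ra / (ra + rb)"
  define p where "p = a + t *\<^sub>R (b - a)"
  have t: "0 \<le> t" "t \<le> 1" "1 - t = rb / (ra + rb)" using assms unfolding t_def by (auto simp: field_simps)
  have "dist a p = t * dist a b" unfolding p_def dist_norm using t by (simp add: norm_minus_commute)
  also have "\<dots> \<le> t * (ra + rb)" using t assms(3) by (simp add: mult_left_mono)
  also have "\<dots> = ra" using assms unfolding t_def by simp
  finally have 1: "p \<in> cball a ra" by simp
  have "p - b = (1 - t) *\<^sub>R (a - b)" unfolding p_def by (simp add: algebra_simps)
  then have "dist b p = norm ((1 - t) *\<^sub>R (a - b))" by (metis dist_commute dist_norm)
  also have "\<dots> = (1 - t) * dist a b" using t(2) by (simp add: dist_norm)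
  also have "\<dots> \<le> (1 - t) * (ra + rb)" using t(2) assms(3) by (intro mult_left_mono) auto
  also have "\<dots> = rb" using assms t(3) by simp
  finally have 2: "p \<in> cball b rb" by simp
  show ?thesis using 1 2 by blast
qed

lemma cball_meet_dist:
  fixes a b :: "'b::real_normed_vector"
  assumes "cball a ra \<inter> cball b rb \<noteq> {}"
  shows "dist a b \<le> ra + rb"
proof -
  obtain x where "dist a x \<le> ra" "dist b x \<le> rb" using assms by auto
  then show ?thesis using dist_triangle[of a b x] by (simp add: dist_commute)
qed

lemma shrink:
  fixes c0 p :: "real^2"
  assumes "\<rho> > 0" "\<rho> \<le> R" "dist c0 p \<le> R + \<rho>"
  obtains q where "dist c0 q \<le> 2*\<rho>" "dist q p \<le> R - \<rho>"
proof (cases "dist c0 p \<le> 2*\<rho>")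
  case True
  then show ?thesis using that[of p] assms by simp
next
  case False
  define d where "d = dist c0 p"
  have dpos: "d > 2*\<rho>" using False d_def by simp
  define q where "q = c0 + (2*\<rho>/d) *\<^sub>R (p - c0)"
  have nd: "norm (p - c0) = d" unfolding d_def by (simp add: dist_norm norm_minus_commute)
  have "dist c0 q = (2*\<rho>/d) * d" unfolding q_def dist_norm using dpos assms(1) nd by simp
  also have "\<dots> = 2*\<rho>" using dpos assms(1) by simp
  finally have 1: "dist c0 q \<le> 2*\<rho>" by simp
  have "q - p = (2*\<rho>/d - 1) *\<^sub>R (p - c0)" unfolding q_def by (simp add: algebra_simps)
  then have "dist q p = \<bar>2*\<rho>/d - 1\<bar> * d" by (simp add: dist_norm nd)
  also have "\<dots> = (1 - 2*\<rho>/d) * d" using dpos assms(1) by (simp add: abs_if field_simps)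
  also have "\<dots> = d - 2*\<rho>" using dpos assms(1) by (simp add: field_simps)
  finally have 2: "dist q p \<le> R - \<rho>" using assms(3) d_def by simp
  show ?thesis using that 1 2 by blast
qed

lemma nbr_bound:
  fixes c :: "'a \<Rightarrow> real^2" and r :: "'a \<Rightarrow> real" and E :: "'a \<Rightarrow> 'a \<Rightarrow> bool"
  assumes fin: "finite V" and rpos: "\<forall>v\<in>V. r v > 0"
    and rep: "\<forall>u\<in>V. \<forall>v\<in>V. u \<noteq> v \<longrightarrow> (E u v \<longleftrightarrow> cball (c u) (r u) \<inter> cball (c v) (r v) \<noteq> {})"
    and tf: "\<not> (\<exists>u\<in>V. \<exists>v\<in>V. \<exists>w\<in>V. E u v \<and> E v w \<and> E u w)"
    and v0: "v0 \<in> V" and mn: "\<forall>u\<in>V. r v0 \<le> r u"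
  shows "card {u\<in>V. u \<noteq> v0 \<and> E v0 u} \<le> 5"
proof -
  define N where "N = {u\<in>V. u \<noteq> v0 \<and> E v0 u}"
  define \<rho> where "\<rho> = r v0"
  have rho: "\<rho> > 0" using rpos v0 \<rho>_def by auto
  have "\<exists>q. dist (c v0) q \<le> 2*\<rho> \<and> dist q (c u) \<le> r u - \<rho>" if "u \<in> N" for u
  proof -
    have u: "u \<in> V" "u \<noteq> v0" "E v0 u" using that N_def by auto
    then have "cball (c v0) (r v0) \<inter> cball (c u) (r u) \<noteq> {}" using rep v0 by metis
    then have "dist (c v0) (c u) \<le> r u + \<rho>" using cball_meet_dist \<rho>_def by fastforce
    then obtain q where "dist (c v0) q \<le> 2*\<rho>" "dist q (c u) \<le> r u - \<rho>"
      using shrink[OF rho, of "r u" "c v0" "c u"] mn u(1) \<rho>_def by blast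
    then show ?thesis by blast
  qed
  then obtain Q where Q: "\<And>u. u \<in> N \<Longrightarrow> dist (c v0) (Q u) \<le> 2*\<rho> \<and> dist (Q u) (c u) \<le> r u - \<rho>"
    by metis
  have sepN: "dist (Q u) (Q w) > 2*\<rho>" if "u \<in> N" "w \<in> N" "u \<noteq> w" for u w
  proof -
    have u: "u \<in> V" "w \<in> V" using that N_def by auto
    have "E v0 u" "E v0 w" using that N_def by auto
    then have "\<not> E u w" using tf v0 u by blast
    then have "cball (c u) (r u) \<inter> cball (c w) (r w) = {}" using rep u that(3) by blast
    then have "dist (c u) (c w) > r u + r w" using cball_meet[of "r u" "r w" "c u" "c w"] rpos u by force
    moreover have "dist (c u) (c w) \<le> dist (c u) (Q u) + dist (Q u) (Q w) + dist (Q w) (c w)"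
      by (meson dist_triangle order_trans add_right_mono)
    moreover have "dist (c u) (Q u) \<le> r u - \<rho>" "dist (Q w) (c w) \<le> r w - \<rho>"
      using Q that by (auto simp: dist_commute)
    ultimately show ?thesis by linarith
  qed
  define h where "h u = c2 (Q u - c v0)" for u
  have hn: "cmod (h u) \<le> 2*\<rho>" if "u \<in> N" for u
    using Q[OF that] unfolding h_def c2_norm by (simp add: dist_norm norm_minus_commute)
  have hd: "cmod (h u - h w) > 2*\<rho>" if "u \<in> N" "w \<in> N" "u \<noteq> w" for u w
    using sepN[OF that] unfolding h_def c2_diff c2_norm by (simp add: dist_norm)
  have inj: "inj_on h N"
  proof (rule inj_onI)
    fix u w assume "u \<in> N" "w \<in> N" "h u = h w"
    then show "u = w" using hd[of u w] rho by force
  qed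
  have finN: "finite N" using fin N_def by auto
  have "card (h ` N) \<le> 5"
  proof (rule five_points[where \<rho> = "2*\<rho>"])
    show "finite (h ` N)" using finN by simp
    show "\<forall>z\<in>h ` N. cmod z \<le> 2 * \<rho>" using hn by auto
    show "\<forall>z\<in>h ` N. \<forall>w\<in>h ` N. z \<noteq> w \<longrightarrow> 2 * \<rho> < cmod (z - w)" using hd by auto
  qed
  then show ?thesis using card_image[OF inj] N_def by simp
qed

lemma col_main:
  fixes c :: "'a \<Rightarrow> real^2" and r :: "'a \<Rightarrow> real" and E :: "'a \<Rightarrow> 'a \<Rightarrow> bool"
  assumes "finite V" and irr: "\<forall>v. \<not> E v v"
  shows "(\<forall>v\<in>V. r v > 0) \<longrightarrow>
    (\<forall>u\<in>V. \<forall>v\<in>V. u \<noteq> v \<longrightarrow> (E u v \<longleftrightarrow> cball (c u) (r u) \<inter> cball (c v) (r v) \<noteq> {})) \<longrightarrow>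
    \<not> (\<exists>u\<in>V. \<exists>v\<in>V. \<exists>w\<in>V. E u v \<and> E v w \<and> E u w) \<longrightarrow>
    (\<exists>col :: 'a \<Rightarrow> nat. (\<forall>v\<in>V. col v < 6) \<and> (\<forall>u\<in>V. \<forall>v\<in>V. E u v \<longrightarrow> col u \<noteq> col v))"
  using assms(1)
proof (induction V rule: finite_remove_induct)
  case empty
  then show ?case by auto
next
  case (remove A)
  show ?case
  proof (intro impI)
    assume rpos: "\<forall>v\<in>A. r v > 0"
      and rep: "\<forall>u\<in>A. \<forall>v\<in>A. u \<noteq> v \<longrightarrow> (E u v \<longleftrightarrow> cball (c u) (r u) \<inter> cball (c v) (r v) \<noteq> {})"
      and tf: "\<not> (\<exists>u\<in>A. \<exists>v\<in>A. \<exists>w\<in>A. E u v \<and> E v w \<and> E u w)"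
    obtain v0 where v0: "v0 \<in> A" "r v0 = Min (r ` A)"
      using Min_in[of "r ` A"] remove(1,2) by (metis (no_types, lifting) empty_is_image finite_imageI imageE)
    have mn: "\<forall>u\<in>A. r v0 \<le> r u" using v0(2) remove(1) by simp
    obtain col :: "'a \<Rightarrow> nat" where col: "\<forall>v\<in>A - {v0}. col v < 6"
      "\<forall>u\<in>A - {v0}. \<forall>v\<in>A - {v0}. E u v \<longrightarrow> col u \<noteq> col v"
    proof -
      have a1: "\<forall>v\<in>A - {v0}. r v > 0" using rpos by simp
      have a2: "\<forall>u\<in>A - {v0}. \<forall>v\<in>A - {v0}. u \<noteq> v \<longrightarrow> (E u v \<longleftrightarrow> cball (c u) (r u) \<inter> cball (c v) (r v) \<noteq> {})"
        using rep by simp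
      have a3: "\<not> (\<exists>u\<in>A - {v0}. \<exists>v\<in>A - {v0}. \<exists>w\<in>A - {v0}. E u v \<and> E v w \<and> E u w)"
        using tf by blast
      show ?thesis using mp[OF mp[OF mp[OF remove(4)[OF v0(1)] a1] a2] a3] that by blast
    qed
    define N where "N = {u\<in>A. u \<noteq> v0 \<and> E v0 u}"
    have cN: "card N \<le> 5" unfolding N_def
      by (rule nbr_bound[OF remove(1) rpos rep tf v0(1) mn])
    have finN: "finite N" using remove(1) N_def by simp
    have "card (col ` N) \<le> 5" using cN card_image_le[OF finN, of col] by linarith
    moreover have "finite (col ` N)" using remove(1) N_def by auto
    ultimately have "\<not> {0..<6::nat} \<subseteq> col ` N"
      using card_mono[of "col ` N" "{0..<6::nat}"] by auto
    then obtain k where k: "k < 6" "k \<notin> col ` N" by (meson atLeastLessThan_iff subsetI zero_le)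
    define col' where "col' = col(v0 := k)"
    have sym: "E v u" if "E u v" "u \<in> A" "v \<in> A" for u v
    proof -
      have "u \<noteq> v" using irr that by metis
      then have "E u v \<longleftrightarrow> cball (c u) (r u) \<inter> cball (c v) (r v) \<noteq> {}"
        "E v u \<longleftrightarrow> cball (c v) (r v) \<inter> cball (c u) (r u) \<noteq> {}" using rep that(2,3) by auto
      then show ?thesis using that(1) by (simp add: Int_commute)
    qed
    show "\<exists>col :: 'a \<Rightarrow> nat. (\<forall>v\<in>A. col v < 6) \<and> (\<forall>u\<in>A. \<forall>v\<in>A. E u v \<longrightarrow> col u \<noteq> col v)"
    proof (intro exI[of _ col'] conjI ballI impI)
      fix v assume "v \<in> A" then show "col' v < 6" using col(1) k(1) unfolding col'_def by auto
    next
      fix u v assume uv: "u \<in> A" "v \<in> A" "E u v"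
      show "col' u \<noteq> col' v"
      proof (cases "u = v0 \<or> v = v0")
        case True
        then show ?thesis
        proof
          assume "u = v0"
          then have "v \<in> N" using uv irr N_def by auto
          then show ?thesis using k(2) \<open>u = v0\<close> irr uv unfolding col'_def by auto
        next
          assume "v = v0"
          then have "u \<in> N" using uv irr N_def sym by auto
          then show ?thesis using k(2) \<open>v = v0\<close> irr uv unfolding col'_def by (metis fun_upd_same fun_upd_other image_eqI)
        qed
      next
        case False
        then show ?thesis using col(2) uv unfolding col'_def by auto
      qed
    qed
  qed
qed

theorem lemma5p2:
  fixes V :: "'a set" and E :: "'a \<Rightarrow> 'a \<Rightarrow> bool"
  assumes "simple_graph V E"
    and "circle_intersection_graph V E"
    and "triangle_free V E"
  shows "proper_colorable V E 6"
proof -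
  have fin: "finite V" and irr: "\<forall>v. \<not> E v v" using assms(1) unfolding simple_graph_def by auto
  obtain c :: "'a \<Rightarrow> real^2" and r :: "'a \<Rightarrow> real" where
    rpos: "\<forall>v\<in>V. r v > 0" and
    rep: "\<forall>u\<in>V. \<forall>v\<in>V. u \<noteq> v \<longrightarrow> (E u v \<longleftrightarrow> cball (c u) (r u) \<inter> cball (c v) (r v) \<noteq> {})"
    using assms(2) unfolding circle_intersection_graph_def by blast
  have tf: "\<not> (\<exists>u\<in>V. \<exists>v\<in>V. \<exists>w\<in>V. E u v \<and> E v w \<and> E u w)"
    using assms(3) unfolding triangle_free_def .
  show ?thesis unfolding proper_colorable_def
    using col_main[of V E r c] fin irr rpos rep tf by blast
qed

end
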